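(* Let $M^2$ be a minimal surface of general type in $\mathbb R^4$, parameterized by semi-canonical parameters $(u,v)$, and satisfying $\gamma_1=0$ identically. Then the function $G\sqrt{|\mu^2-\nu^2|}$ does not depend on $u$.
   Context: $\mathbb R^4$ carries the standard metric $g=\langle\cdot,\cdot\rangle$ and flat connection $\nabla'$; everything is smooth and local. For a regular surface $M^2: z=z(u,v)$ let $E,F,G$ be the first fundamental form coefficients, $\sigma$ the second fundamental form, $K$ the Gauss curvature, and $\varkappa$ the curvature of the normal connection, $\varkappa=g(R^\perp(x,y)n_2,n_1)$ for a positively oriented orthonormal frame $(x,y,n_1,n_2)$ with $x,y$ tangent. Minimal means $\sigma(x,x)+\sigma(y,y)=0$ for orthonormal tangent $x,y$. A minimal surface is of general type if $K^2-\varkappa^2>0$ and $\varkappa\neq0$ everywhere. The ellipse of curvature at $p$ is $\{\sigma(v,v): v\in T_pM^2,\ |v|=1\}$; a tangent line is canonical if it is collinear with an axis of this ellipse. The geometric frame is a positively oriented orthonormal frame $\{x,y,n_1,n_2\}$ with $x,y$ canonical tangent fields and $n_1,n_2$ normal, satisfying $\nabla'_xx=\gamma_1y+\nu n_1$, $\nabla'_xy=-\gamma_1x+\mu n_2$, $\nabla'_yx=-\gamma_2y+\mu n_2$, $\nabla'_yy=\gamma_2x-\nu n_1$, $\nabla'_xn_1=-\nu x+\beta_1n_2$, $\nabla'_yn_1=\nu y+\beta_2n_2$, $\nabla'_xn_2=-\mu y-\beta_1n_1$, $\nabla'_yn_2=-\mu x-\beta_2n_1$, with $\mu>0$, $\nu\ne0$,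 $\mu^2\ne\nu^2$; the functions $\nu,\mu,\gamma_1,\gamma_2,\beta_1,\beta_2$ are the invariants of $M^2$. Parameters $(u,v)$ are semi-canonical if the parametric lines are integral curves of the canonical tangents, with $F=0$, $x=z_u/\sqrt E$, $y=z_v/\sqrt G$; then $\gamma_1=-y(\ln\sqrt E)$, $\gamma_2=-x(\ln\sqrt G)$. *)

theory Defs
  imports "HOL-Analysis.Analysis"
begin

type_synonym vec4 = "real^4"

definition pu :: "(real \<times> real \<Rightarrow> 'a::real_normed_vector) \<Rightarrow> real \<times> real \<Rightarrow> 'a" where
  "pu f p = vector_derivative (\<lambda>t. f (t, snd p)) (at (fst p))"

definition pv :: "(real \<times> real \<Rightarrow> 'a::real_normed_vector) \<Rightarrow> real \<times> real \<Rightarrow> 'a" where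
  "pv f p = vector_derivative (\<lambda>t. f (fst p, t)) (at (snd p))"

fun dpart :: "bool list \<Rightarrow> (real \<times> real \<Rightarrow> 'a::real_normed_vector) \<Rightarrow> real \<times> real \<Rightarrow> 'a" where
  "dpart [] f = f"
| "dpart (b # bs) f = (if b then pu (dpart bs f) else pv (dpart bs f))"

definition smooth_on :: "(real \<times> real) set \<Rightarrow> (real \<times> real \<Rightarrow> 'a::real_normed_vector) \<Rightarrow> bool" where
  "smooth_on U f \<longleftrightarrow>
     (\<forall>bs. continuous_on U (dpart bs f) \<and>
        (\<forall>p\<in>U. (\<lambda>t. dpart bs f (t, snd p)) differentiable (at (fst p)) \<and>
                (\<lambda>t. dpart bs f (fst p, t)) differentiable (at (snd p))))"

definition EE :: "(real \<times> real \<Rightarrow> vec4) \<Rightarrow> real \<times> real \<Rightarrow> real" where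
  "EE z p = pu z p \<bullet> pu z p"
definition FF :: "(real \<times> real \<Rightarrow> vec4) \<Rightarrow> real \<times> real \<Rightarrow> real" where
  "FF z p = pu z p \<bullet> pv z p"
definition GG :: "(real \<times> real \<Rightarrow> vec4) \<Rightarrow> real \<times> real \<Rightarrow> real" where
  "GG z p = pv z p \<bullet> pv z p"

definition regular_surface :: "(real \<times> real) set \<Rightarrow> (real \<times> real \<Rightarrow> vec4) \<Rightarrow> bool" where
  "regular_surface U z \<longleftrightarrow> open U \<and> smooth_on U z \<and>
     (\<forall>p\<in>U. EE z p * GG z p - (FF z p)^2 > 0)"

text \<open>Unit tangent fields along the parametric lines (for orthogonal parameters, F = 0).\<close>
definition xu :: "(real \<times> real \<Rightarrow> vec4) \<Rightarrow> real \<times> real \<Rightarrow> vec4" where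
  "xu z p = (1 / sqrt (EE z p)) *\<^sub>R pu z p"
definition yv :: "(real \<times> real \<Rightarrow> vec4) \<Rightarrow> real \<times> real \<Rightarrow> vec4" where
  "yv z p = (1 / sqrt (GG z p)) *\<^sub>R pv z p"

text \<open>Flat derivative of a field X along xu resp. yv: nabla'_x X = X_u / sqrt E, nabla'_y X = X_v / sqrt G.\<close>
definition Dx :: "(real \<times> real \<Rightarrow> vec4) \<Rightarrow> (real \<times> real \<Rightarrow> 'a::real_normed_vector) \<Rightarrow> real \<times> real \<Rightarrow> 'a" where
  "Dx z X p = (1 / sqrt (EE z p)) *\<^sub>R pu X p"
definition Dy :: "(real \<times> real \<Rightarrow> vec4) \<Rightarrow> (real \<times> real \<Rightarrow> 'a::real_normed_vector) \<Rightarrow> real \<times> real \<Rightarrow> 'a" where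
  "Dy z X p = (1 / sqrt (GG z p)) *\<^sub>R pv X p"

text \<open>Normal component of a vector at p (orthogonal parameters).\<close>
definition nrm :: "(real \<times> real \<Rightarrow> vec4) \<Rightarrow> real \<times> real \<Rightarrow> vec4 \<Rightarrow> vec4" where
  "nrm z p w = w - (w \<bullet> xu z p) *\<^sub>R xu z p - (w \<bullet> yv z p) *\<^sub>R yv z p"

text \<open>Minimality: sigma(x,x) + sigma(y,y) = 0, sigma(X,Y) = normal part of nabla'_X Y.\<close>
definition minimal_surface :: "(real \<times> real) set \<Rightarrow> (real \<times> real \<Rightarrow> vec4) \<Rightarrow> bool" where
  "minimal_surface U z \<longleftrightarrow>
     (\<forall>p\<in>U. nrm z p (Dx z (xu z) p) + nrm z p (Dy z (yv z) p) = 0)"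

text \<open>Gauss curvature for orthogonal parameters (F = 0), intrinsic formula.\<close>
definition gauss_curv :: "(real \<times> real \<Rightarrow> vec4) \<Rightarrow> real \<times> real \<Rightarrow> real" where
  "gauss_curv z p = - 1 / (2 * sqrt (EE z p * GG z p)) *
     (pv (\<lambda>q. pv (EE z) q / sqrt (EE z q * GG z q)) p
      + pu (\<lambda>q. pu (GG z) q / sqrt (EE z q * GG z q)) p)"

text \<open>Normal connection along coordinate fields and normal curvature
  kappa = g(R_perp(x,y) n2, n1), with R_perp(z_u,z_v) = D_u D_v - D_v D_u (coordinate fields commute)
  and R_perp(x,y) = R_perp(z_u,z_v) / sqrt(E G).\<close>
definition Nu :: "(real \<times> real \<Rightarrow> vec4) \<Rightarrow> (real \<times> real \<Rightarrow> vec4) \<Rightarrow> real \<times> real \<Rightarrow> vec4" where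
  "Nu z \<xi> p = nrm z p (pu \<xi> p)"
definition Nv :: "(real \<times> real \<Rightarrow> vec4) \<Rightarrow> (real \<times> real \<Rightarrow> vec4) \<Rightarrow> real \<times> real \<Rightarrow> vec4" where
  "Nv z \<xi> p = nrm z p (pv \<xi> p)"

definition normal_curv :: "(real \<times> real \<Rightarrow> vec4) \<Rightarrow> (real \<times> real \<Rightarrow> vec4) \<Rightarrow> (real \<times> real \<Rightarrow> vec4)
    \<Rightarrow> real \<times> real \<Rightarrow> real" where
  "normal_curv z n1 n2 p =
     ((Nu z (Nv z n2) p - Nv z (Nu z n2) p) \<bullet> n1 p) / sqrt (EE z p * GG z p)"

definition pos_orthonormal :: "vec4 \<Rightarrow> vec4 \<Rightarrow> vec4 \<Rightarrow> vec4 \<Rightarrow> bool" where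
  "pos_orthonormal a b c d \<longleftrightarrow>
     (\<forall>e\<in>{a,b,c,d}. e \<bullet> e = 1) \<and>
     a \<bullet> b = 0 \<and> a \<bullet> c = 0 \<and> a \<bullet> d = 0 \<and> b \<bullet> c = 0 \<and> b \<bullet> d = 0 \<and> c \<bullet> d = 0 \<and>
     det (vector [a, b, c, d] :: real^4^4) > 0"

text \<open>The geometric frame {x,y,n1,n2} with invariants nu, mu, gamma1, gamma2, beta1, beta2,
  where x = z_u/sqrt E and y = z_v/sqrt G (semi-canonical parameters).\<close>
definition geometric_frame ::
  "(real \<times> real) set \<Rightarrow> (real \<times> real \<Rightarrow> vec4) \<Rightarrow> (real \<times> real \<Rightarrow> vec4) \<Rightarrow> (real \<times> real \<Rightarrow> vec4)
   \<Rightarrow> (real \<times> real \<Rightarrow> real) \<Rightarrow> (real \<times> real \<Rightarrow> real) \<Rightarrow> (real \<times> real \<Rightarrow> real)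
   \<Rightarrow> (real \<times> real \<Rightarrow> real) \<Rightarrow> (real \<times> real \<Rightarrow> real) \<Rightarrow> (real \<times> real \<Rightarrow> real) \<Rightarrow> bool" where
  "geometric_frame U z n1 n2 \<nu> \<mu> \<gamma>1 \<gamma>2 \<beta>1 \<beta>2 \<longleftrightarrow>
    smooth_on U n1 \<and> smooth_on U n2 \<and>
    smooth_on U \<nu> \<and> smooth_on U \<mu> \<and> smooth_on U \<gamma>1 \<and> smooth_on U \<gamma>2 \<and>
    smooth_on U \<beta>1 \<and> smooth_on U \<beta>2 \<and>
    (\<forall>p\<in>U. let x = xu z; y = yv z in
       pos_orthonormal (x p) (y p) (n1 p) (n2 p) \<and>
       Dx z x p = \<gamma>1 p *\<^sub>R y p + \<nu> p *\<^sub>R n1 p \<and>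
       Dx z y p = - \<gamma>1 p *\<^sub>R x p + \<mu> p *\<^sub>R n2 p \<and>
       Dy z x p = - \<gamma>2 p *\<^sub>R y p + \<mu> p *\<^sub>R n2 p \<and>
       Dy z y p = \<gamma>2 p *\<^sub>R x p - \<nu> p *\<^sub>R n1 p \<and>
       Dx z n1 p = - \<nu> p *\<^sub>R x p + \<beta>1 p *\<^sub>R n2 p \<and>
       Dy z n1 p = \<nu> p *\<^sub>R y p + \<beta>2 p *\<^sub>R n2 p \<and>
       Dx z n2 p = - \<mu> p *\<^sub>R y p - \<beta>1 p *\<^sub>R n1 p \<and>
       Dy z n2 p = - \<mu> p *\<^sub>R x p - \<beta>2 p *\<^sub>R n1 p \<and>
       \<mu> p > 0 \<and> \<nu> p \<noteq> 0 \<and> (\<mu> p)^2 \<noteq> (\<nu> p)^2)"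

end

theory Submission imports Defs begin

lemma hvd_inner:
  assumes "(f has_vector_derivative f') (at t)" "(g has_vector_derivative g') (at t)"
  shows "((\<lambda>s. f s \<bullet> g s) has_real_derivative (f' \<bullet> g t + f t \<bullet> g')) (at t)"
  unfolding has_real_derivative_iff_has_vector_derivative has_vector_derivative_def
  by (rule has_derivative_eq_rhs[OF has_derivative_inner[OF assms[unfolded has_vector_derivative_def]]])
     (auto simp: fun_eq_iff algebra_simps inner_commute)

lemma hvd_inner_const:
  assumes "(f has_vector_derivative f') (at t)"
  shows "((\<lambda>s. f s \<bullet> w) has_real_derivative (f' \<bullet> w)) (at t)"
  using hvd_inner[OF assms has_vector_derivative_const[of w]] by simp

lemma dpart_pu: "dpart bs (pu f) = dpart (bs @ [True]) f" by (induction bs) auto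
lemma dpart_pv: "dpart bs (pv f) = dpart (bs @ [False]) f" by (induction bs) auto

lemma smooth_pu: "smooth_on U f \<Longrightarrow> smooth_on U (pu f)"
  unfolding smooth_on_def dpart_pu by blast
lemma smooth_pv: "smooth_on U f \<Longrightarrow> smooth_on U (pv f)"
  unfolding smooth_on_def dpart_pv by blast
lemma smooth_cont: "smooth_on U f \<Longrightarrow> continuous_on U f"
  unfolding smooth_on_def using dpart.simps(1) by metis

lemma smooth_du: "smooth_on U f \<Longrightarrow> p \<in> U \<Longrightarrow>
   ((\<lambda>t. f (t, snd p)) has_vector_derivative pu f p) (at (fst p))"
  unfolding smooth_on_def pu_def using dpart.simps(1) vector_derivative_works by metis
lemma smooth_dv: "smooth_on U f \<Longrightarrow> p \<in> U \<Longrightarrow>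
   ((\<lambda>t. f (fst p, t)) has_vector_derivative pv f p) (at (snd p))"
  unfolding smooth_on_def pv_def using dpart.simps(1) vector_derivative_works by metis

lemma dist_sq_le:
  assumes "u \<le> s" "s \<le> u + h" "v \<le> t" "t \<le> v + h"
  shows "dist (s,t) (u,v) \<le> 2*h"
proof -
  have "dist (s,t) (u,v) \<le> \<bar>dist s u\<bar> + \<bar>dist t v\<bar>"
    unfolding dist_Pair_Pair by (rule sqrt_sum_squares_le_sum_abs)
  also have "\<dots> \<le> 2*h" using assms by (simp add: dist_real_def)
  finally show ?thesis .
qed

lemma clairaut:
  fixes f :: "real \<times> real \<Rightarrow> 'a::real_inner"
  assumes S: "open S" and sm: "smooth_on S f" and q: "(u,v) \<in> S"
  shows "pv (pu f) (u,v) = pu (pv f) (u,v)"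
proof (rule ccontr)
  define w where "w = pv (pu f) (u,v) - pu (pv f) (u,v)"
  assume "pv (pu f) (u,v) \<noteq> pu (pv f) (u,v)"
  then have wpos: "w \<bullet> w > 0" unfolding w_def by simp
  define g1 where "g1 = (\<lambda>q. pv (pu f) q \<bullet> w)"
  define g2 where "g2 = (\<lambda>q. pu (pv f) q \<bullet> w)"
  have sm1: "smooth_on S (pv (pu f))" and sm2: "smooth_on S (pu (pv f))"
    and smu: "smooth_on S (pu f)" and smv: "smooth_on S (pv f)"
    using sm by (auto intro: smooth_pu smooth_pv)
  have "isCont (pv (pu f)) (u,v)" "isCont (pu (pv f)) (u,v)"
    using smooth_cont[OF sm1] smooth_cont[OF sm2] S q continuous_on_eq_continuous_at by blast+
  then have c1: "isCont g1 (u,v)" and c2: "isCont g2 (u,v)"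
    unfolding g1_def g2_def by (auto intro!: continuous_intros)
  define eps where "eps = w \<bullet> w / 2"
  have eps: "eps > 0" using wpos by (simp add: eps_def)
  obtain d1 where d1: "d1 > 0" "\<And>x. dist x (u,v) < d1 \<Longrightarrow> dist (g1 x) (g1 (u,v)) < eps"
    using c1[unfolded continuous_at_eps_delta] eps by blast
  obtain d2 where d2: "d2 > 0" "\<And>x. dist x (u,v) < d2 \<Longrightarrow> dist (g2 x) (g2 (u,v)) < eps"
    using c2[unfolded continuous_at_eps_delta] eps by blast
  obtain r where r: "r > 0" "ball (u,v) r \<subseteq> S" using S q open_contains_ball by blast
  define h where "h = min r (min d1 d2) / 4"
  have h: "h > 0" using r d1 d2 by (simp add: h_def)
  have inB: "dist (s,t) (u,v) < min r (min d1 d2)" if "u \<le> s" "s \<le> u + h" "v \<le> t" "t \<le> v + h" for s t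
    using dist_sq_le[OF that] h unfolding h_def by linarith
  have inS: "(s,t) \<in> S" if "u \<le> s" "s \<le> u + h" "v \<le> t" "t \<le> v + h" for s t
    using inB[OF that] r by (auto simp: dist_commute)
  define \<Delta> where "\<Delta> = (f (u+h,v+h) - f (u+h,v) - f (u,v+h) + f (u,v)) \<bullet> w"
  have "\<exists>s>u. s < u + h \<and> (\<lambda>s. (f (s,v+h) - f (s,v)) \<bullet> w) (u+h) - (\<lambda>s. (f (s,v+h) - f (s,v)) \<bullet> w) u
          = (u + h - u) * ((pu f (s,v+h) - pu f (s,v)) \<bullet> w)"
  proof (rule MVT2)
    show "u < u + h" using h by simp
    fix s assume "u \<le> s" "s \<le> u + h"
    then have "(s,v+h) \<in> S" "(s,v) \<in> S" using inS h by auto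
    from smooth_du[OF sm this(1)] smooth_du[OF sm this(2)]
    have "((\<lambda>t. f (t, v+h) - f (t,v)) has_vector_derivative (pu f (s,v+h) - pu f (s,v))) (at s)"
      by (auto intro: has_vector_derivative_diff)
    then show "((\<lambda>s. (f (s,v+h) - f (s,v)) \<bullet> w) has_real_derivative ((pu f (s,v+h) - pu f (s,v)) \<bullet> w)) (at s)"
      by (rule hvd_inner_const)
  qed
  then obtain s1 where s1: "u < s1" "s1 < u + h" "\<Delta> = h * ((pu f (s1,v+h) - pu f (s1,v)) \<bullet> w)"
    unfolding \<Delta>_def by (auto simp: algebra_simps inner_diff_left)
  have "\<exists>t>v. t < v + h \<and> (\<lambda>t. pu f (s1,t) \<bullet> w) (v+h) - (\<lambda>t. pu f (s1,t) \<bullet> w) v = (v + h - v) * g1 (s1,t)"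
  proof (rule MVT2)
    show "v < v + h" using h by simp
    fix t assume "v \<le> t" "t \<le> v + h"
    then have "(s1,t) \<in> S" using inS s1 by auto
    from smooth_dv[OF smu this]
    show "((\<lambda>t. pu f (s1,t) \<bullet> w) has_real_derivative g1 (s1,t)) (at t)"
      unfolding g1_def by (auto intro: hvd_inner_const)
  qed
  then obtain t1 where t1: "v < t1" "t1 < v + h" "pu f (s1,v+h) \<bullet> w - pu f (s1,v) \<bullet> w = h * g1 (s1,t1)"
    by auto
  have D1: "\<Delta> = h * h * g1 (s1,t1)" using s1(3) t1(3) by (simp add: inner_diff_left)
  have "\<exists>t>v. t < v + h \<and> (\<lambda>t. (f (u+h,t) - f (u,t)) \<bullet> w) (v+h) - (\<lambda>t. (f (u+h,t) - f (u,t)) \<bullet> w) v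
          = (v + h - v) * ((pv f (u+h,t) - pv f (u,t)) \<bullet> w)"
  proof (rule MVT2)
    show "v < v + h" using h by simp
    fix t assume "v \<le> t" "t \<le> v + h"
    then have "(u+h,t) \<in> S" "(u,t) \<in> S" using inS h by auto
    from smooth_dv[OF sm this(1)] smooth_dv[OF sm this(2)]
    have "((\<lambda>s. f (u+h, s) - f (u,s)) has_vector_derivative (pv f (u+h,t) - pv f (u,t))) (at t)"
      by (auto intro: has_vector_derivative_diff)
    then show "((\<lambda>t. (f (u+h,t) - f (u,t)) \<bullet> w) has_real_derivative ((pv f (u+h,t) - pv f (u,t)) \<bullet> w)) (at t)"
      by (rule hvd_inner_const)
  qed
  then obtain t2 where t2: "v < t2" "t2 < v + h" "\<Delta> = h * ((pv f (u+h,t2) - pv f (u,t2)) \<bullet> w)"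
    unfolding \<Delta>_def by (auto simp: algebra_simps inner_diff_left)
  have "\<exists>s>u. s < u + h \<and> (\<lambda>s. pv f (s,t2) \<bullet> w) (u+h) - (\<lambda>s. pv f (s,t2) \<bullet> w) u = (u + h - u) * g2 (s,t2)"
  proof (rule MVT2)
    show "u < u + h" using h by simp
    fix s assume "u \<le> s" "s \<le> u + h"
    then have "(s,t2) \<in> S" using inS t2 by auto
    from smooth_du[OF smv this]
    show "((\<lambda>s. pv f (s,t2) \<bullet> w) has_real_derivative g2 (s,t2)) (at s)"
      unfolding g2_def by (auto intro: hvd_inner_const)
  qed
  then obtain s2 where s2: "u < s2" "s2 < u + h" "pv f (u+h,t2) \<bullet> w - pv f (u,t2) \<bullet> w = h * g2 (s2,t2)"
    by auto
  have D2: "\<Delta> = h * h * g2 (s2,t2)" using t2(3) s2(3) by (simp add: inner_diff_left)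
  have eq: "g1 (s1,t1) = g2 (s2,t2)" using D1 D2 h by simp
  have "dist (g1 (s1,t1)) (g1 (u,v)) < eps"
    using d1(2)[OF order.strict_trans2[OF inB]] s1 t1 by fastforce
  moreover have "dist (g2 (s2,t2)) (g2 (u,v)) < eps"
    using d2(2)[OF order.strict_trans2[OF inB]] s2 t2 by fastforce
  moreover have "g1 (u,v) - g2 (u,v) = w \<bullet> w"
    unfolding g1_def g2_def w_def by (simp add: inner_diff_left inner_diff_right)
  ultimately show False using eq unfolding eps_def dist_real_def by linarith
qed

lemma hvd_normalize:
  fixes W :: "real \<Rightarrow> 'a::real_inner"
  assumes W: "(W has_vector_derivative W') (at t)" and pos: "W t \<bullet> W t > 0"
  shows "\<exists>c. ((\<lambda>s. (1 / sqrt (W s \<bullet> W s)) *\<^sub>R W s) has_vector_derivative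
               (c *\<^sub>R W t + (1 / sqrt (W t \<bullet> W t)) *\<^sub>R W')) (at t)"
proof -
  have N: "((\<lambda>s. W s \<bullet> W s) has_real_derivative (W' \<bullet> W t + W t \<bullet> W')) (at t)"
    by (rule hvd_inner[OF W W])
  have S: "((\<lambda>s. sqrt (W s \<bullet> W s)) has_real_derivative (inverse (sqrt (W t \<bullet> W t)) / 2 * (W' \<bullet> W t + W t \<bullet> W'))) (at t)"
    by (rule DERIV_chain2[OF DERIV_real_sqrt[OF pos] N])
  have "\<exists>c. ((\<lambda>s. 1 / sqrt (W s \<bullet> W s)) has_real_derivative c) (at t)"
    using DERIV_inverse_fun[OF S] pos unfolding divide_inverse by auto
  then obtain c where "((\<lambda>s. 1 / sqrt (W s \<bullet> W s)) has_real_derivative c) (at t)" by blast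
  from has_vector_derivative_scaleR[OF this W] show ?thesis by (auto simp: add.commute)
qed

lemma pu_xu:
  assumes sm: "smooth_on U z" and q: "q \<in> U" and E: "EE z q > 0"
  shows "\<exists>c. pu (xu z) q = c *\<^sub>R pu z q + (1 / sqrt (EE z q)) *\<^sub>R pu (pu z) q"
proof -
  have W: "((\<lambda>t. pu z (t, snd q)) has_vector_derivative pu (pu z) q) (at (fst q))"
    using smooth_du[OF smooth_pu[OF sm] q] .
  have pos: "pu z (fst q, snd q) \<bullet> pu z (fst q, snd q) > 0" using E by (simp add: EE_def)
  obtain c where c: "((\<lambda>s. (1 / sqrt (pu z (s, snd q) \<bullet> pu z (s, snd q))) *\<^sub>R pu z (s, snd q)) has_vector_derivative
      (c *\<^sub>R pu z (fst q, snd q) + (1 / sqrt (pu z (fst q, snd q) \<bullet> pu z (fst q, snd q))) *\<^sub>R pu (pu z) q)) (at (fst q))"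
    using hvd_normalize[OF W pos] by blast
  have "pu (xu z) q = vector_derivative (\<lambda>s. (1 / sqrt (pu z (s, snd q) \<bullet> pu z (s, snd q))) *\<^sub>R pu z (s, snd q)) (at (fst q))"
    by (simp add: pu_def[of "xu z" q] xu_def EE_def)
  also have "\<dots> = c *\<^sub>R pu z q + (1 / sqrt (EE z q)) *\<^sub>R pu (pu z) q"
    using vector_derivative_at[OF c] by (simp add: EE_def)
  finally show ?thesis by blast
qed

lemma pv_xu:
  assumes sm: "smooth_on U z" and q: "q \<in> U" and E: "EE z q > 0"
  shows "\<exists>c. pv (xu z) q = c *\<^sub>R pu z q + (1 / sqrt (EE z q)) *\<^sub>R pv (pu z) q"
proof -
  have W: "((\<lambda>t. pu z (fst q, t)) has_vector_derivative pv (pu z) q) (at (snd q))"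
    using smooth_dv[OF smooth_pu[OF sm] q] .
  have pos: "pu z (fst q, snd q) \<bullet> pu z (fst q, snd q) > 0" using E by (simp add: EE_def)
  obtain c where c: "((\<lambda>s. (1 / sqrt (pu z (fst q, s) \<bullet> pu z (fst q, s))) *\<^sub>R pu z (fst q, s)) has_vector_derivative
      (c *\<^sub>R pu z (fst q, snd q) + (1 / sqrt (pu z (fst q, snd q) \<bullet> pu z (fst q, snd q))) *\<^sub>R pv (pu z) q)) (at (snd q))"
    using hvd_normalize[OF W] pos by auto
  have "pv (xu z) q = vector_derivative (\<lambda>s. (1 / sqrt (pu z (fst q, s) \<bullet> pu z (fst q, s))) *\<^sub>R pu z (fst q, s)) (at (snd q))"
    by (simp add: pv_def[of "xu z" q] xu_def EE_def)
  also have "\<dots> = c *\<^sub>R pu z q + (1 / sqrt (EE z q)) *\<^sub>R pv (pu z) q"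
    using vector_derivative_at[OF c] by (simp add: EE_def)
  finally show ?thesis by blast
qed

lemma pv_yv:
  assumes sm: "smooth_on U z" and q: "q \<in> U" and G: "GG z q > 0"
  shows "\<exists>c. pv (yv z) q = c *\<^sub>R pv z q + (1 / sqrt (GG z q)) *\<^sub>R pv (pv z) q"
proof -
  have W: "((\<lambda>t. pv z (fst q, t)) has_vector_derivative pv (pv z) q) (at (snd q))"
    using smooth_dv[OF smooth_pv[OF sm] q] .
  have pos: "pv z (fst q, snd q) \<bullet> pv z (fst q, snd q) > 0" using G by (simp add: GG_def)
  obtain c where c: "((\<lambda>s. (1 / sqrt (pv z (fst q, s) \<bullet> pv z (fst q, s))) *\<^sub>R pv z (fst q, s)) has_vector_derivative
      (c *\<^sub>R pv z (fst q, snd q) + (1 / sqrt (pv z (fst q, snd q) \<bullet> pv z (fst q, snd q))) *\<^sub>R pv (pv z) q)) (at (snd q))"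
    using hvd_normalize[OF W] pos by auto
  have "pv (yv z) q = vector_derivative (\<lambda>s. (1 / sqrt (pv z (fst q, s) \<bullet> pv z (fst q, s))) *\<^sub>R pv z (fst q, s)) (at (snd q))"
    by (simp add: pv_def[of "yv z" q] yv_def GG_def)
  also have "\<dots> = c *\<^sub>R pv z q + (1 / sqrt (GG z q)) *\<^sub>R pv (pv z) q"
    using vector_derivative_at[OF c] by (simp add: GG_def)
  finally show ?thesis by blast
qed

lemma final_alg:
  fixes E G e g mu nu b2 muu nuu Gu Eu :: real
  assumes e: "e > 0" "e * e = E" and g: "g > 0" "g * g = G"
    and hA: "g*mu*Eu/(2*e) + g*b2*E*nu - e*mu*Gu/(2*g) = (Eu/(2*e))*g*mu + e*(Gu/(2*g))*mu + e*g*muu"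
    and hB: "- (e*G*mu*b2) = - (Gu*nu + G*nuu)"
  shows "2*G*Gu*(mu^2 - nu^2) + G^2*(2*mu*muu - 2*nu*nuu) = 0"
proof -
  have hA': "g*mu*Eu/(2*e) + g*b2*(e*e)*nu - e*mu*Gu/(2*g) = (Eu/(2*e))*g*mu + e*(Gu/(2*g))*mu + e*g*muu"
    using hA e(2) by simp
  have hB': "- (e*(g*g)*mu*b2) = - (Gu*nu + (g*g)*nuu)" using hB g(2) by simp
  have m: "e*g*muu = g*b2*(e*e)*nu - e*mu*Gu/g" using hA' by (simp add: field_simps)
  have m1: "e * (g*g*muu - (g*g*b2*e*nu - mu*Gu)) = 0" using m g(1) by (simp add: field_simps)
  then have "g*g*muu = g*g*b2*e*nu - mu*Gu" using e(1) by simp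
  then have m2: "muu = e*b2*nu - mu*Gu/(g*g)" using g(1) by (simp add: field_simps)
  have n: "nuu = e*mu*b2 - nu*Gu/(g*g)"
    using hB' e(1) g(1) by (simp add: field_simps)
  show ?thesis unfolding m2 n g(2)[symmetric] using e(1) g(1) by (simp add: field_simps power2_eq_square)
qed

lemma scale_inv:
  fixes x y :: "'a::real_vector"
  assumes "(c::real) > 0" "(1/c) *\<^sub>R x = y" shows "x = c *\<^sub>R y"
proof -
  have "x = c *\<^sub>R ((1/c) *\<^sub>R x)" using assms(1) by simp
  then show ?thesis using assms(2) by simp
qed

lemma hA_conv:
  fixes e g E mu b2 nu X Y muu :: real
  assumes "e > 0" "g > 0"
   "- (g * (- mu * (1/e) * X - b2 * (E * nu))) + e * (- mu * (1/g) * Y) =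
     (inverse e / 2 * (X+X) * g + inverse g / 2 * (Y+Y) * e) * mu + muu * (e*g)"
  shows "g*mu*(2*X)/(2*e) + g*b2*E*nu - e*mu*(2*Y)/(2*g) = ((2*X)/(2*e))*g*mu + e*((2*Y)/(2*g))*mu + e*g*muu"
  using assms by (simp add: field_simps)

lemma hB_conv:
  fixes e g G mu b2 nu Y nuu :: real
  assumes "e > 0" "g > 0" "g * g = G"
   "- (g * (nu * (1/g) * Y + b2 * (e*g*mu))) + e * (- nu * (1/e) * (-Y)) = - ((Y+Y)*nu + nuu*G)"
  shows "- (e*G*mu*b2) = - ((2*Y)*nu + G*nuu)"
  using assms by (simp add: field_simps)

lemma po_facts:
  assumes "pos_orthonormal a b c d"
  shows "a \<bullet> a = 1" "b \<bullet> b = 1" "c \<bullet> c = 1" "d \<bullet> d = 1"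
    "a \<bullet> b = 0" "a \<bullet> c = 0" "a \<bullet> d = 0" "b \<bullet> c = 0" "b \<bullet> d = 0" "c \<bullet> d = 0"
    "b \<bullet> a = 0" "c \<bullet> a = 0" "d \<bullet> a = 0" "c \<bullet> b = 0" "d \<bullet> b = 0" "d \<bullet> c = 0"
  using assms unfolding pos_orthonormal_def by (auto simp: inner_commute)

lemma point_facts:
  assumes sm: "smooth_on U z" and q: "q \<in> U" and E: "EE z q > 0" and G: "GG z q > 0"
  and PO: "pos_orthonormal (xu z q) (yv z q) (n1 q) (n2 q)"
  and Dxx: "Dx z (xu z) q = g1 *\<^sub>R yv z q + nu *\<^sub>R n1 q"
  and Dyx: "Dy z (xu z) q = - g2 *\<^sub>R yv z q + mu *\<^sub>R n2 q"
  and Dyy: "Dy z (yv z) q = g2 *\<^sub>R xu z q - nu *\<^sub>R n1 q"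
  shows "pu z q \<bullet> n1 q = 0" "pu z q \<bullet> n2 q = 0" "pv z q \<bullet> n1 q = 0" "pv z q \<bullet> n2 q = 0"
    "pu (pu z) q \<bullet> n2 q = 0" "pu (pu z) q \<bullet> n1 q = EE z q * nu"
    "pv (pu z) q \<bullet> n2 q = sqrt (EE z q) * sqrt (GG z q) * mu" "pv (pu z) q \<bullet> n1 q = 0"
    "pv (pv z) q \<bullet> n1 q = - (GG z q * nu)" "pv (pv z) q \<bullet> n2 q = 0"
proof -
  note o = po_facts[OF PO]
  have se: "sqrt (EE z q) > 0" and sg: "sqrt (GG z q) > 0" using E G by auto
  have see: "sqrt (EE z q) * sqrt (EE z q) = EE z q" and sgg: "sqrt (GG z q) * sqrt (GG z q) = GG z q"
    using E G by auto
  have zu: "pu z q = sqrt (EE z q) *\<^sub>R xu z q" using se by (simp add: xu_def)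
  have zv: "pv z q = sqrt (GG z q) *\<^sub>R yv z q" using sg by (simp add: yv_def)
  show a1: "pu z q \<bullet> n1 q = 0" "pu z q \<bullet> n2 q = 0" "pv z q \<bullet> n1 q = 0" "pv z q \<bullet> n2 q = 0"
    unfolding zu zv using o by simp_all
  obtain c1 where c1: "pu (xu z) q = c1 *\<^sub>R pu z q + (1 / sqrt (EE z q)) *\<^sub>R pu (pu z) q"
    using pu_xu[OF sm q E] by blast
  obtain c2 where c2: "pv (xu z) q = c2 *\<^sub>R pu z q + (1 / sqrt (EE z q)) *\<^sub>R pv (pu z) q"
    using pv_xu[OF sm q E] by blast
  obtain c3 where c3: "pv (yv z) q = c3 *\<^sub>R pv z q + (1 / sqrt (GG z q)) *\<^sub>R pv (pv z) q"
    using pv_yv[OF sm q G] by blast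
  have V1: "(1 / sqrt (EE z q)) *\<^sub>R (c1 *\<^sub>R pu z q + (1 / sqrt (EE z q)) *\<^sub>R pu (pu z) q) = g1 *\<^sub>R yv z q + nu *\<^sub>R n1 q"
    using Dxx c1 by (simp add: Dx_def)
  have V2: "(1 / sqrt (GG z q)) *\<^sub>R (c2 *\<^sub>R pu z q + (1 / sqrt (EE z q)) *\<^sub>R pv (pu z) q) = - g2 *\<^sub>R yv z q + mu *\<^sub>R n2 q"
    using Dyx c2 by (simp add: Dy_def)
  have V3: "(1 / sqrt (GG z q)) *\<^sub>R (c3 *\<^sub>R pv z q + (1 / sqrt (GG z q)) *\<^sub>R pv (pv z) q) = g2 *\<^sub>R xu z q - nu *\<^sub>R n1 q"
    using Dyy c3 by (simp add: Dy_def)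
  have "pu (pu z) q \<bullet> n2 q / (sqrt (EE z q) * sqrt (EE z q)) = 0"
    using arg_cong[OF V1, of "\<lambda>w. w \<bullet> n2 q"] a1 o by (simp add: inner_add_left inner_diff_left)
  then show "pu (pu z) q \<bullet> n2 q = 0" using se by simp
  have "pu (pu z) q \<bullet> n1 q / (sqrt (EE z q) * sqrt (EE z q)) = nu"
    using arg_cong[OF V1, of "\<lambda>w. w \<bullet> n1 q"] a1 o by (simp add: inner_add_left inner_diff_left)
  then show "pu (pu z) q \<bullet> n1 q = EE z q * nu" using se see by (simp add: field_simps)
  have "pv (pu z) q \<bullet> n2 q / (sqrt (GG z q) * sqrt (EE z q)) = mu"
    using arg_cong[OF V2, of "\<lambda>w. w \<bullet> n2 q"] a1 o by (simp add: inner_add_left inner_diff_left)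
  then show "pv (pu z) q \<bullet> n2 q = sqrt (EE z q) * sqrt (GG z q) * mu" using se sg by (simp add: field_simps)
  have "pv (pu z) q \<bullet> n1 q / (sqrt (GG z q) * sqrt (EE z q)) = 0"
    using arg_cong[OF V2, of "\<lambda>w. w \<bullet> n1 q"] a1 o by (simp add: inner_add_left inner_diff_left)
  then show "pv (pu z) q \<bullet> n1 q = 0" using se sg by simp
  have "pv (pv z) q \<bullet> n1 q / (sqrt (GG z q) * sqrt (GG z q)) = - nu"
    using arg_cong[OF V3, of "\<lambda>w. w \<bullet> n1 q"] a1 o by (simp add: inner_add_left inner_diff_left)
  then show "pv (pv z) q \<bullet> n1 q = - (GG z q * nu)" using sg sgg by (simp add: field_simps)
  have "pv (pv z) q \<bullet> n2 q / (sqrt (GG z q) * sqrt (GG z q)) = 0"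
    using arg_cong[OF V3, of "\<lambda>w. w \<bullet> n2 q"] a1 o by (simp add: inner_add_left inner_diff_left)
  then show "pv (pv z) q \<bullet> n2 q = 0" using sg by simp
qed

theorem lemma7p1:
  fixes z n1 n2 :: "real \<times> real \<Rightarrow> real^4"
    and \<nu> \<mu> \<gamma>1 \<gamma>2 \<beta>1 \<beta>2 :: "real \<times> real \<Rightarrow> real"
    and a b c d :: real
  defines "U \<equiv> {a<..<b} \<times> {c<..<d}"
  assumes reg: "regular_surface U z"
    and semi: "\<forall>p\<in>U. FF z p = 0"
    and frame: "geometric_frame U z n1 n2 \<nu> \<mu> \<gamma>1 \<gamma>2 \<beta>1 \<beta>2"
    and minimal: "minimal_surface U z"
    and gentype: "\<forall>p\<in>U. (gauss_curv z p)^2 - (normal_curv z n1 n2 p)^2 > 0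
                        \<and> normal_curv z n1 n2 p \<noteq> 0"
    and g1: "\<forall>p\<in>U. \<gamma>1 p = 0"
  shows "\<forall>u1 u2 v. (u1, v) \<in> U \<longrightarrow> (u2, v) \<in> U \<longrightarrow>
           GG z (u1, v) * sqrt \<bar>(\<mu> (u1, v))^2 - (\<nu> (u1, v))^2\<bar> =
           GG z (u2, v) * sqrt \<bar>(\<mu> (u2, v))^2 - (\<nu> (u2, v))^2\<bar>"
proof -
  have opU: "open U" unfolding U_def by (simp add: open_Times)
  have smz: "smooth_on U z" and EGF: "\<forall>p\<in>U. EE z p * GG z p - (FF z p)^2 > 0"
    using reg unfolding regular_surface_def by auto
  have EG: "EE z q > 0" "GG z q > 0" if "q \<in> U" for q
  proof -
    have "EE z q * GG z q > 0" using EGF semi that by auto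
    moreover have "EE z q \<ge> 0" "GG z q \<ge> 0" by (auto simp: EE_def GG_def)
    ultimately show "EE z q > 0" "GG z q > 0" by (auto simp: zero_less_mult_iff)
  qed
  have smn1: "smooth_on U n1" and smn2: "smooth_on U n2" and smmu: "smooth_on U \<mu>" and smnu: "smooth_on U \<nu>"
    using frame unfolding geometric_frame_def by auto
  have F: "pos_orthonormal (xu z q) (yv z q) (n1 q) (n2 q)"
   "Dx z (xu z) q = \<gamma>1 q *\<^sub>R yv z q + \<nu> q *\<^sub>R n1 q"
   "Dy z (xu z) q = - \<gamma>2 q *\<^sub>R yv z q + \<mu> q *\<^sub>R n2 q"
   "Dy z (yv z) q = \<gamma>2 q *\<^sub>R xu z q - \<nu> q *\<^sub>R n1 q"
   "Dx z n1 q = - \<nu> q *\<^sub>R xu z q + \<beta>1 q *\<^sub>R n2 q"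
   "Dy z n1 q = \<nu> q *\<^sub>R yv z q + \<beta>2 q *\<^sub>R n2 q"
   "Dx z n2 q = - \<mu> q *\<^sub>R yv z q - \<beta>1 q *\<^sub>R n1 q"
   "Dy z n2 q = - \<mu> q *\<^sub>R xu z q - \<beta>2 q *\<^sub>R n1 q"
    if "q \<in> U" for q
    using frame that unfolding geometric_frame_def Let_def by blast+
  have PF: "pu z q \<bullet> n1 q = 0" "pu z q \<bullet> n2 q = 0" "pv z q \<bullet> n1 q = 0" "pv z q \<bullet> n2 q = 0"
    "pu (pu z) q \<bullet> n2 q = 0" "pu (pu z) q \<bullet> n1 q = EE z q * \<nu> q"
    "pv (pu z) q \<bullet> n2 q = sqrt (EE z q) * sqrt (GG z q) * \<mu> q" "pv (pu z) q \<bullet> n1 q = 0"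
    "pv (pv z) q \<bullet> n1 q = - (GG z q * \<nu> q)" "pv (pv z) q \<bullet> n2 q = 0" if q: "q \<in> U" for q
    using point_facts[of U z q n1 n2 "\<gamma>1 q" "\<nu> q" "\<gamma>2 q" "\<mu> q", OF smz q EG(1)[OF q] EG(2)[OF q] F(1)[OF q] F(2)[OF q] F(3)[OF q] F(4)[OF q]] by auto
  have CZ: "pv (pu z) q = pu (pv z) q" if "q \<in> U" for q
    using clairaut[OF opU smz, of "fst q" "snd q"] that by simp
  have CZu: "pv (pu (pu z)) q = pu (pv (pu z)) q" if "q \<in> U" for q
    using clairaut[OF opU smooth_pu[OF smz], of "fst q" "snd q"] that by simp
  have CZv: "pv (pu (pv z)) q = pu (pv (pv z)) q" if "q \<in> U" for q
    using clairaut[OF opU smooth_pv[OF smz], of "fst q" "snd q"] that by simp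
  have key: "((\<lambda>s. GG z (s,v0)^2 * ((\<mu> (s,v0))^2 - (\<nu> (s,v0))^2)) has_real_derivative 0) (at t0)"
    if p: "(t0,v0) \<in> U" for t0 v0
  proof -
    let ?p = "(t0,v0)"
    let ?E = "EE z ?p" and ?G = "GG z ?p"
    have EGp: "?E > 0" "?G > 0" using EG p by auto
    have se: "sqrt ?E > 0" and sg: "sqrt ?G > 0" using EGp by auto
    have see: "sqrt ?E * sqrt ?E = ?E" and sgg: "sqrt ?G * sqrt ?G = ?G" using EGp by auto
    have tab: "t0 \<in> {a<..<b}" and vcd: "v0 \<in> {c<..<d}" using p unfolding U_def by auto
    have inU1: "(s,v0) \<in> U" if "s \<in> {a<..<b}" for s using that vcd unfolding U_def by auto
    have inU2: "(t0,s) \<in> U" if "s \<in> {c<..<d}" for s using that tab unfolding U_def by auto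
    have hdv: "((\<lambda>s. f (s, v0)) has_vector_derivative pu f ?p) (at t0)" if "smooth_on U f" for f :: "real \<times> real \<Rightarrow> real^4"
      using smooth_du[OF that p] by simp
    have hdr: "((\<lambda>s. f (s, v0)) has_real_derivative pu f ?p) (at t0)" if "smooth_on U f" for f :: "real \<times> real \<Rightarrow> real"
      using smooth_du[OF that p] by (simp add: has_real_derivative_iff_has_vector_derivative)
    have vdv: "((\<lambda>s. f (t0, s)) has_vector_derivative pv f ?p) (at v0)" if "smooth_on U f" for f :: "real \<times> real \<Rightarrow> real^4"
      using smooth_dv[OF that p] by simp
    have dG: "((\<lambda>s. GG z (s,v0)) has_real_derivative (pu (pv z) ?p \<bullet> pv z ?p + pv z ?p \<bullet> pu (pv z) ?p)) (at t0)"
      using hvd_inner[OF hdv[OF smooth_pv[OF smz]] hdv[OF smooth_pv[OF smz]]] unfolding GG_def by simp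
    have dE: "((\<lambda>s. EE z (s,v0)) has_real_derivative (pu (pu z) ?p \<bullet> pu z ?p + pu z ?p \<bullet> pu (pu z) ?p)) (at t0)"
      using hvd_inner[OF hdv[OF smooth_pu[OF smz]] hdv[OF smooth_pu[OF smz]]] unfolding EE_def by simp
    have dmu: "((\<lambda>s. \<mu> (s,v0)) has_real_derivative pu \<mu> ?p) (at t0)" by (rule hdr[OF smmu])
    have dnu: "((\<lambda>s. \<nu> (s,v0)) has_real_derivative pu \<nu> ?p) (at t0)" by (rule hdr[OF smnu])
    have dA1: "((\<lambda>s. pv (pu z) (s,v0) \<bullet> n2 (s,v0)) has_real_derivative
        (pu (pv (pu z)) ?p \<bullet> n2 ?p + pv (pu z) ?p \<bullet> pu n2 ?p)) (at t0)"
      using hvd_inner[OF hdv[OF smooth_pv[OF smooth_pu[OF smz]]] hdv[OF smn2]] by simp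
    note sE = DERIV_chain2[OF DERIV_real_sqrt[OF EGp(1)] dE]
    note sG = DERIV_chain2[OF DERIV_real_sqrt[OF EGp(2)] dG]
    note dA2 = DERIV_mult[OF DERIV_mult[OF sE sG] dmu]
    have dA2': "((\<lambda>s. pv (pu z) (s,v0) \<bullet> n2 (s,v0)) has_real_derivative
        (inverse (sqrt ?E) / 2 * (pu (pu z) ?p \<bullet> pu z ?p + pu z ?p \<bullet> pu (pu z) ?p) * sqrt ?G +
         inverse (sqrt ?G) / 2 * (pu (pv z) ?p \<bullet> pv z ?p + pv z ?p \<bullet> pu (pv z) ?p) * sqrt ?E) * \<mu> ?p +
        pu \<mu> ?p * (sqrt ?E * sqrt ?G)) (at t0)"
      by (rule has_field_derivative_transform_within_open[OF dA2 _ tab]) (auto simp: PF(7)[OF inU1])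
    note eqA = DERIV_unique[OF dA1 dA2']
    have dB1: "((\<lambda>s. pv (pv z) (s,v0) \<bullet> n1 (s,v0)) has_real_derivative
        (pu (pv (pv z)) ?p \<bullet> n1 ?p + pv (pv z) ?p \<bullet> pu n1 ?p)) (at t0)"
      using hvd_inner[OF hdv[OF smooth_pv[OF smooth_pv[OF smz]]] hdv[OF smn1]] by simp
    note dB2 = DERIV_minus[OF DERIV_mult[OF dG dnu]]
    have dB2': "((\<lambda>s. pv (pv z) (s,v0) \<bullet> n1 (s,v0)) has_real_derivative
        - ((pu (pv z) ?p \<bullet> pv z ?p + pv z ?p \<bullet> pu (pv z) ?p) * \<nu> ?p + pu \<nu> ?p * ?G)) (at t0)"
      by (rule has_field_derivative_transform_within_open[OF dB2 _ tab]) (auto simp: PF(9)[OF inU1])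
    note eqB = DERIV_unique[OF dB1 dB2']
    have C1a: "((\<lambda>s. pu (pu z) (t0,s) \<bullet> n2 (t0,s)) has_real_derivative
        (pv (pu (pu z)) ?p \<bullet> n2 ?p + pu (pu z) ?p \<bullet> pv n2 ?p)) (at v0)"
      using hvd_inner[OF vdv[OF smooth_pu[OF smooth_pu[OF smz]]] vdv[OF smn2]] by simp
    have C1b: "((\<lambda>s. pu (pu z) (t0,s) \<bullet> n2 (t0,s)) has_real_derivative 0) (at v0)"
      by (rule has_field_derivative_transform_within_open[OF DERIV_const[of 0] _ vcd]) (auto simp: PF(5)[OF inU2])
    note C1 = DERIV_unique[OF C1a C1b]
    have C2a: "((\<lambda>s. pu (pv z) (t0,s) \<bullet> n1 (t0,s)) has_real_derivative
        (pv (pu (pv z)) ?p \<bullet> n1 ?p + pu (pv z) ?p \<bullet> pv n1 ?p)) (at v0)"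
      using hvd_inner[OF vdv[OF smooth_pu[OF smooth_pv[OF smz]]] vdv[OF smn1]] by simp
    have C2b: "((\<lambda>s. pu (pv z) (t0,s) \<bullet> n1 (t0,s)) has_real_derivative 0) (at v0)"
      by (rule has_field_derivative_transform_within_open[OF DERIV_const[of 0] _ vcd])
         (auto simp: CZ[OF inU2, symmetric] PF(8)[OF inU2])
    note C2 = DERIV_unique[OF C2a C2b]
    have C3a: "((\<lambda>s. pu z (t0,s) \<bullet> pv z (t0,s)) has_real_derivative
        (pv (pu z) ?p \<bullet> pv z ?p + pu z ?p \<bullet> pv (pv z) ?p)) (at v0)"
      using hvd_inner[OF vdv[OF smooth_pu[OF smz]] vdv[OF smooth_pv[OF smz]]] by simp
    have C3b: "((\<lambda>s. pu z (t0,s) \<bullet> pv z (t0,s)) has_real_derivative 0) (at v0)"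
      by (rule has_field_derivative_transform_within_open[OF DERIV_const[of 0] _ vcd])
         (use semi inU2 in \<open>auto simp: FF_def\<close>)
    note C3 = DERIV_unique[OF C3a C3b]
    have pun2: "pu n2 ?p = sqrt ?E *\<^sub>R (- \<mu> ?p *\<^sub>R yv z ?p - \<beta>1 ?p *\<^sub>R n1 ?p)"
      by (rule scale_inv[OF se]) (use F(7)[OF p] in \<open>simp add: Dx_def\<close>)
    have pvn2: "pv n2 ?p = sqrt ?G *\<^sub>R (- \<mu> ?p *\<^sub>R xu z ?p - \<beta>2 ?p *\<^sub>R n1 ?p)"
      by (rule scale_inv[OF sg]) (use F(8)[OF p] in \<open>simp add: Dy_def\<close>)
    have pun1: "pu n1 ?p = sqrt ?E *\<^sub>R (- \<nu> ?p *\<^sub>R xu z ?p + \<beta>1 ?p *\<^sub>R n2 ?p)"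
      by (rule scale_inv[OF se]) (use F(5)[OF p] in \<open>simp add: Dx_def\<close>)
    have pvn1: "pv n1 ?p = sqrt ?G *\<^sub>R (\<nu> ?p *\<^sub>R yv z ?p + \<beta>2 ?p *\<^sub>R n2 ?p)"
      by (rule scale_inv[OF sg]) (use F(6)[OF p] in \<open>simp add: Dy_def\<close>)
    have xp: "xu z ?p = (1 / sqrt ?E) *\<^sub>R pu z ?p" by (simp add: xu_def)
    have yp: "yv z ?p = (1 / sqrt ?G) *\<^sub>R pv z ?p" by (simp add: yv_def)
    have CZp: "pu (pv z) ?p = pv (pu z) ?p" using CZ[OF p] by simp
    have I1: "pu (pu z) ?p \<bullet> pv n2 ?p = sqrt ?G * (- \<mu> ?p * (1 / sqrt ?E) * (pu (pu z) ?p \<bullet> pu z ?p) - \<beta>2 ?p * (?E * \<nu> ?p))"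
      unfolding pvn2 xp using PF(6)[OF p] by (simp add: inner_diff_right algebra_simps)
    have I2: "pv (pu z) ?p \<bullet> pu n2 ?p = sqrt ?E * (- \<mu> ?p * (1 / sqrt ?G) * (pv (pu z) ?p \<bullet> pv z ?p))"
      unfolding pun2 yp using PF(8)[OF p] by (simp add: inner_diff_right algebra_simps)
    have I3: "pu (pv z) ?p \<bullet> pv n1 ?p = sqrt ?G * (\<nu> ?p * (1 / sqrt ?G) * (pv (pu z) ?p \<bullet> pv z ?p) + \<beta>2 ?p * (sqrt ?E * sqrt ?G * \<mu> ?p))"
      unfolding pvn1 yp CZp using PF(7)[OF p] by (simp add: inner_add_right algebra_simps)
    have I4: "pv (pv z) ?p \<bullet> pu n1 ?p = sqrt ?E * (- \<nu> ?p * (1 / sqrt ?E) * (pu z ?p \<bullet> pv (pv z) ?p))"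
      unfolding pun1 xp using PF(10)[OF p] by (simp add: inner_add_right algebra_simps inner_commute)
    define X where "X = pu (pu z) ?p \<bullet> pu z ?p"
    define Y where "Y = pv (pu z) ?p \<bullet> pv z ?p"
    have Y': "pu (pv z) ?p \<bullet> pv z ?p = Y" "pv z ?p \<bullet> pu (pv z) ?p = Y"
      unfolding Y_def CZp by (simp_all add: inner_commute)
    have X': "pu z ?p \<bullet> pu (pu z) ?p = X" unfolding X_def by (simp add: inner_commute)
    have Z3: "pu z ?p \<bullet> pv (pv z) ?p = - Y" using C3 unfolding Y_def by simp
    have A1: "pu (pv (pu z)) ?p \<bullet> n2 ?p = - (pu (pu z) ?p \<bullet> pv n2 ?p)"
      using C1 CZu[OF p] by (simp add: eq_neg_iff_add_eq_0)
    have B1: "pu (pv (pv z)) ?p \<bullet> n1 ?p = - (pu (pv z) ?p \<bullet> pv n1 ?p)"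
      using C2 CZv[OF p] by (simp add: eq_neg_iff_add_eq_0)
    have eqA': "- (sqrt ?G * (- \<mu> ?p * (1 / sqrt ?E) * X - \<beta>2 ?p * (?E * \<nu> ?p)))
        + sqrt ?E * (- \<mu> ?p * (1 / sqrt ?G) * Y)
        = (inverse (sqrt ?E) / 2 * (X + X) * sqrt ?G + inverse (sqrt ?G) / 2 * (Y + Y) * sqrt ?E) * \<mu> ?p
          + pu \<mu> ?p * (sqrt ?E * sqrt ?G)"
      using eqA unfolding A1 I1 I2 X' Y' by (simp add: X_def Y_def)
    have eqB': "- (sqrt ?G * (\<nu> ?p * (1 / sqrt ?G) * Y + \<beta>2 ?p * (sqrt ?E * sqrt ?G * \<mu> ?p)))
        + sqrt ?E * (- \<nu> ?p * (1 / sqrt ?E) * (- Y)) = - ((Y + Y) * \<nu> ?p + pu \<nu> ?p * ?G)"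
      using eqB unfolding B1 I3 I4 Z3 Y' Y_def[symmetric] .
    note hA = hA_conv[OF se sg eqA']
    note hB = hB_conv[OF se sg sgg eqB']
    note fin = final_alg[OF se see sg sgg hA hB]
    show ?thesis
      apply (rule derivative_eq_intros dG dmu dnu refl)+
      using fin unfolding Y' by (simp add: algebra_simps power2_eq_square)
  qed
  show ?thesis
  proof (intro allI impI)
    fix u1 u2 v assume u1: "(u1, v) \<in> U" and u2: "(u2, v) \<in> U"
    define hh where "hh s = GG z (s,v)^2 * ((\<mu> (s,v))^2 - (\<nu> (s,v))^2)" for s
    have gen: "hh x = hh y" if xy: "x \<le> y" "(x,v) \<in> U" "(y,v) \<in> U" for x y
    proof (cases "x = y")
      case False
      then have "x < y" using xy by simp
      have D: "(hh has_real_derivative 0) (at s)" if "x \<le> s" "s \<le> y" for s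
      proof -
        have "(s,v) \<in> U" using xy that unfolding U_def by auto
        from key[OF this] show ?thesis unfolding hh_def .
      qed
      have "\<exists>w>x. w < y \<and> hh y - hh x = (y - x) * (\<lambda>_. 0) w"
        by (rule MVT2[OF \<open>x < y\<close>]) (rule D)
      then show ?thesis by auto
    qed simp
    have e12: "hh u1 = hh u2"
    proof (cases "u1 \<le> u2")
      case True
      show ?thesis by (rule gen[OF True u1 u2])
    next
      case False
      then have "u2 \<le> u1" by simp
      from gen[OF this u2 u1] show ?thesis by (rule sym)
    qed
    have r: "GG z (u, v) * sqrt \<bar>(\<mu> (u, v))^2 - (\<nu> (u, v))^2\<bar> = sqrt \<bar>hh u\<bar>"
      if "(u,v) \<in> U" for u
    proof -
      have g: "GG z (u,v) > 0" using EG(2)[OF that] .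
      have "sqrt \<bar>hh u\<bar> = \<bar>GG z (u,v)\<bar> * sqrt \<bar>(\<mu> (u, v))^2 - (\<nu> (u, v))^2\<bar>"
        unfolding hh_def abs_mult abs_power2 real_sqrt_mult real_sqrt_abs ..
      then show ?thesis using g by simp
    qed
    show "GG z (u1, v) * sqrt \<bar>(\<mu> (u1, v))^2 - (\<nu> (u1, v))^2\<bar> =
           GG z (u2, v) * sqrt \<bar>(\<mu> (u2, v))^2 - (\<nu> (u2, v))^2\<bar>"
      unfolding r[OF u1] r[OF u2] e12 ..
  qed
qed

end
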